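(* Let $\mathcal{H}$ be the Hilbert space described in the context and $p\in[1,\infty)$. Let $\mu$ be a Borel probability measure on $\mathcal{H}$ such that for some $s>2p$, $$\widetilde{M}_s(\mu):=\int \Big(\sum_{j=1}^{\infty}\frac{1}{\lambda_j^2}\langle x, \psi_j\rangle^2_{L^2} \Big)^{\frac{s}{2}}\,\mu(dx) <\infty,$$ and assume there are constants $\gamma,c,C>0$ with $\lambda_j\le C\exp(-cj^\gamma)$ for all $j\ge1$. Then $$\int_{\mathcal{H}} \|\mathrm{Proj}^d (x)-x\|^q_{\mathcal{H}}\,\mu(dx) \leq C \exp\left(-c qd^\gamma\right)$$ for all $d\geq 1$ and all $q\in [p,s]$, where the constant $c$ depends only on $\widetilde{M}_s(\mu)$ and the constant $C$ depends only on $q$ and $\widetilde{M}_s(\mu)$.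
   Context: Let $(\Omega,m)$ be a measure space, $(\psi_j)_{j\ge1}$ an orthonormal basis of $L^2(\Omega,m)$ with inner product $\langle\cdot,\cdot\rangle_{L^2}$, and $(\lambda_j)_{j\ge1}$ a non-increasing sequence of positive numbers converging to $0$. Let $\mathcal{H}=\{f\in L^2(\Omega,m):\sum_j\langle f,\psi_j\rangle_{L^2}^2/\lambda_j<\infty\}$ with inner product $\langle f,g\rangle_{\mathcal{H}}=\sum_j\lambda_j^{-1}\langle f,\psi_j\rangle_{L^2}\langle g,\psi_j\rangle_{L^2}$ and norm $\|\cdot\|_{\mathcal{H}}$. $\mathrm{Proj}^d$ is the orthogonal projection onto $\mathrm{span}\{\sqrt{\lambda_j}\psi_j:j=1,\dots,d\}$. *)

theory Defs
  imports "HOL-Probability.Probability"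
begin

text \<open>The measure space (Omega, m) is an arbitrary measure M :: 'a measure.
  Elements of L^2 are represented by square-integrable measurable functions 'a => real.
  The orthonormal basis psi and the eigenvalues lam are indexed by j >= 1
  (the values at index 0 are irrelevant).\<close>

definition L2_set :: "'a measure \<Rightarrow> ('a \<Rightarrow> real) set" where
  "L2_set M = {f. f \<in> borel_measurable M \<and> integrable M (\<lambda>w. (f w)^2)}"

definition L2_inner :: "'a measure \<Rightarrow> ('a \<Rightarrow> real) \<Rightarrow> ('a \<Rightarrow> real) \<Rightarrow> real" where
  "L2_inner M f g = (LINT w|M. f w * g w)"

definition is_ONB :: "'a measure \<Rightarrow> (nat \<Rightarrow> 'a \<Rightarrow> real) \<Rightarrow> bool" where
  "is_ONB M psi \<longleftrightarrow>
     (\<forall>j\<ge>1. psi j \<in> L2_set M) \<and>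
     (\<forall>i\<ge>1. \<forall>j\<ge>1. L2_inner M (psi i) (psi j) = (if i = j then 1 else 0)) \<and>
     (\<forall>f\<in>L2_set M. (\<forall>j\<ge>1. L2_inner M f (psi j) = 0) \<longrightarrow> (AE w in M. f w = 0))"

definition H_set :: "'a measure \<Rightarrow> (nat \<Rightarrow> 'a \<Rightarrow> real) \<Rightarrow> (nat \<Rightarrow> real) \<Rightarrow> ('a \<Rightarrow> real) set" where
  "H_set M psi lam = {f \<in> L2_set M.
      summable (\<lambda>j. (L2_inner M f (psi (Suc j)))^2 / lam (Suc j))}"

definition H_inner :: "'a measure \<Rightarrow> (nat \<Rightarrow> 'a \<Rightarrow> real) \<Rightarrow> (nat \<Rightarrow> real)
    \<Rightarrow> ('a \<Rightarrow> real) \<Rightarrow> ('a \<Rightarrow> real) \<Rightarrow> real" where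
  "H_inner M psi lam f g =
     (\<Sum>j. L2_inner M f (psi (Suc j)) * L2_inner M g (psi (Suc j)) / lam (Suc j))"

definition H_norm :: "'a measure \<Rightarrow> (nat \<Rightarrow> 'a \<Rightarrow> real) \<Rightarrow> (nat \<Rightarrow> real)
    \<Rightarrow> ('a \<Rightarrow> real) \<Rightarrow> real" where
  "H_norm M psi lam f = sqrt (H_inner M psi lam f f)"

definition H_open :: "'a measure \<Rightarrow> (nat \<Rightarrow> 'a \<Rightarrow> real) \<Rightarrow> (nat \<Rightarrow> real)
    \<Rightarrow> ('a \<Rightarrow> real) set \<Rightarrow> bool" where
  "H_open M psi lam U \<longleftrightarrow> U \<subseteq> H_set M psi lam \<and>
     (\<forall>x\<in>U. \<exists>e>0. \<forall>y\<in>H_set M psi lam.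
        H_norm M psi lam (\<lambda>w. y w - x w) < e \<longrightarrow> y \<in> U)"

definition H_borel :: "'a measure \<Rightarrow> (nat \<Rightarrow> 'a \<Rightarrow> real) \<Rightarrow> (nat \<Rightarrow> real)
    \<Rightarrow> ('a \<Rightarrow> real) measure" where
  "H_borel M psi lam = sigma (H_set M psi lam) {U. H_open M psi lam U}"

text \<open>Orthogonal projection onto span of the H-orthonormal family sqrt(lam j) psi j, j = 1..d.\<close>

definition H_ONvec :: "(nat \<Rightarrow> 'a \<Rightarrow> real) \<Rightarrow> (nat \<Rightarrow> real) \<Rightarrow> nat \<Rightarrow> 'a \<Rightarrow> real" where
  "H_ONvec psi lam j = (\<lambda>w. sqrt (lam j) * psi j w)"

definition Proj :: "'a measure \<Rightarrow> (nat \<Rightarrow> 'a \<Rightarrow> real) \<Rightarrow> (nat \<Rightarrow> real) \<Rightarrow> nat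
    \<Rightarrow> ('a \<Rightarrow> real) \<Rightarrow> 'a \<Rightarrow> real" where
  "Proj M psi lam d x = (\<lambda>w. \<Sum>j=1..d.
      H_inner M psi lam x (H_ONvec psi lam j) * H_ONvec psi lam j w)"

definition Mtilde :: "'a measure \<Rightarrow> (nat \<Rightarrow> 'a \<Rightarrow> real) \<Rightarrow> (nat \<Rightarrow> real) \<Rightarrow> real
    \<Rightarrow> ('a \<Rightarrow> real) measure \<Rightarrow> ennreal" where
  "Mtilde M psi lam s \<mu> = (\<integral>\<^sup>+ x.
      (let a = (\<lambda>j. (L2_inner M x (psi (Suc j)))^2 / (lam (Suc j))^2) in
        if summable a then ennreal ((suminf a) powr (s / 2)) else \<infinity>) \<partial>\<mu>)"

end

theory Submission
  imports Defs
begin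


lemma L2_prod_integrable:
  assumes "f \<in> L2_set M" "g \<in> L2_set M"
  shows "integrable M (\<lambda>w. f w * g w)"
proof (rule Bochner_Integration.integrable_bound[where f="\<lambda>w. (f w)^2 + (g w)^2"])
  show "integrable M (\<lambda>w. (f w)^2 + (g w)^2)" using assms by (auto simp: L2_set_def)
  show "(\<lambda>w. f w * g w) \<in> borel_measurable M" using assms by (auto simp: L2_set_def)
  show "AE x in M. norm (f x * g x) \<le> norm ((f x)^2 + (g x)^2)"
  proof (intro AE_I2)
    fix x
    have "0 \<le> (\<bar>f x\<bar> - \<bar>g x\<bar>)^2" by simp
    then have "2 * (\<bar>f x\<bar> * \<bar>g x\<bar>) \<le> (f x)^2 + (g x)^2"
      by (simp add: power2_eq_square algebra_simps)
    moreover have "0 \<le> \<bar>f x\<bar> * \<bar>g x\<bar>" by simp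
    ultimately have "\<bar>f x\<bar> * \<bar>g x\<bar> \<le> (f x)^2 + (g x)^2" by linarith
    then show "norm (f x * g x) \<le> norm ((f x)^2 + (g x)^2)"
      by (simp add: abs_mult)
  qed
qed

lemma L2_diff:
  assumes "f \<in> L2_set M" "g \<in> L2_set M"
  shows "(\<lambda>w. f w - g w) \<in> L2_set M"
proof -
  have "integrable M (\<lambda>w. (f w)^2 + (g w)^2 - 2 * (f w * g w))"
    using assms L2_prod_integrable[OF assms] by (auto simp: L2_set_def)
  moreover have "(\<lambda>w. (f w)^2 + (g w)^2 - 2 * (f w * g w)) = (\<lambda>w. (f w - g w)^2)"
    by (auto simp: power2_eq_square algebra_simps)
  ultimately show ?thesis using assms by (auto simp: L2_set_def)
qed

lemma L2_inner_diff:
  assumes "f \<in> L2_set M" "g \<in> L2_set M" "h \<in> L2_set M"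
  shows "L2_inner M (\<lambda>w. f w - g w) h = L2_inner M f h - L2_inner M g h"
proof -
  have "L2_inner M (\<lambda>w. f w - g w) h = (LINT w|M. f w * h w - g w * h w)"
    unfolding L2_inner_def by (simp add: algebra_simps)
  also have "\<dots> = L2_inner M f h - L2_inner M g h"
    unfolding L2_inner_def
    by (rule Bochner_Integration.integral_diff) (auto intro: L2_prod_integrable assms)
  finally show ?thesis .
qed



lemma H_diff:
  assumes onb: "is_ONB M psi" and lam_pos: "\<forall>j\<ge>1. lam j > 0"
    and x: "x \<in> H_set M psi lam" and y: "y \<in> H_set M psi lam"
  shows "(\<lambda>w. y w - x w) \<in> H_set M psi lam"
    and "\<And>j. j \<ge> 1 \<Longrightarrow> L2_inner M (\<lambda>w. y w - x w) (psi j) = L2_inner M y (psi j) - L2_inner M x (psi j)"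
proof -
  have xL: "x \<in> L2_set M" and yL: "y \<in> L2_set M" using x y by (auto simp: H_set_def)
  have pL: "\<And>j. j \<ge> 1 \<Longrightarrow> psi j \<in> L2_set M" using onb by (auto simp: is_ONB_def)
  show ip: "\<And>j. j \<ge> 1 \<Longrightarrow> L2_inner M (\<lambda>w. y w - x w) (psi j) = L2_inner M y (psi j) - L2_inner M x (psi j)"
    by (rule L2_inner_diff[OF yL xL pL])
  have sx: "summable (\<lambda>j. (L2_inner M x (psi (Suc j)))^2 / lam (Suc j))"
   and sy: "summable (\<lambda>j. (L2_inner M y (psi (Suc j)))^2 / lam (Suc j))" using x y by (auto simp: H_set_def)
  have "summable (\<lambda>j. (L2_inner M (\<lambda>w. y w - x w) (psi (Suc j)))^2 / lam (Suc j))"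
  proof (rule summable_comparison_test'[OF summable_add[OF summable_mult[OF sy, of 2] summable_mult[OF sx, of 2]]])
    fix n :: nat assume "n \<ge> 0"
    define a where "a = L2_inner M y (psi (Suc n))"
    define b where "b = L2_inner M x (psi (Suc n))"
    have l: "lam (Suc n) > 0" using lam_pos by auto
    have "(a - b)^2 \<le> 2 * a^2 + 2 * b^2"
      using sum_squares_ge_zero[of "a+b" 0] by (simp add: power2_eq_square algebra_simps)
    then have "(a - b)^2 / lam (Suc n) \<le> (2 * a^2 + 2 * b^2) / lam (Suc n)"
      using l by (simp add: divide_right_mono)
    then show "norm ((L2_inner M (\<lambda>w. y w - x w) (psi (Suc n)))^2 / lam (Suc n))
       \<le> 2 * ((L2_inner M y (psi (Suc n)))^2 / lam (Suc n)) + 2 * ((L2_inner M x (psi (Suc n)))^2 / lam (Suc n))"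
      using l ip[of "Suc n"] by (simp add: a_def b_def add_divide_distrib)
  qed
  then show "(\<lambda>w. y w - x w) \<in> H_set M psi lam"
    using L2_diff[OF yL xL] by (simp add: H_set_def)
qed

lemma coord_bound:
  assumes lam_pos: "\<forall>j\<ge>1. lam j > 0" and z: "z \<in> H_set M psi lam"
  shows "(L2_inner M z (psi (Suc k)))^2 / lam (Suc k) \<le> H_inner M psi lam z z"
proof -
  have s: "summable (\<lambda>j. (L2_inner M z (psi (Suc j)))^2 / lam (Suc j))" using z by (auto simp: H_set_def)
  have "sum (\<lambda>j. (L2_inner M z (psi (Suc j)))^2 / lam (Suc j)) {k} \<le> (\<Sum>j. (L2_inner M z (psi (Suc j)))^2 / lam (Suc j))"
    by (rule sum_le_suminf[OF s]) (use lam_pos in \<open>auto intro!: divide_nonneg_pos\<close>)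
  then show ?thesis by (simp add: H_inner_def power2_eq_square)
qed

lemma H_borel_space: "space (H_borel M psi lam) = H_set M psi lam"
  unfolding H_borel_def by (rule space_measure_of) (auto simp: H_open_def)

lemma H_borel_open: "H_open M psi lam U \<Longrightarrow> U \<in> sets (H_borel M psi lam)"
  unfolding H_borel_def
  by (subst sets_measure_of) (auto simp: H_open_def intro: sigma_sets.Basic)

lemma coord_measurable:
  assumes onb: "is_ONB M psi" and lam_pos: "\<forall>j\<ge>1. lam j > 0"
  shows "(\<lambda>x. L2_inner M x (psi (Suc k))) \<in> borel_measurable (H_borel M psi lam)"
proof (rule borel_measurableI)
  fix S :: "real set" assume S: "open S"
  let ?f = "\<lambda>x. L2_inner M x (psi (Suc k))"
  have l: "lam (Suc k) > 0" using lam_pos by auto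
  have "H_open M psi lam (?f -` S \<inter> H_set M psi lam)"
    unfolding H_open_def
  proof (intro conjI ballI)
    fix x assume xin: "x \<in> ?f -` S \<inter> H_set M psi lam"
    then obtain e where e: "e > 0" "ball (?f x) e \<subseteq> S" using S openE by (metis IntD1 vimageE)
    show "\<exists>e>0. \<forall>y\<in>H_set M psi lam. H_norm M psi lam (\<lambda>w. y w - x w) < e \<longrightarrow> y \<in> ?f -` S \<inter> H_set M psi lam"
    proof (intro exI[of _ "e / sqrt (lam (Suc k))"] conjI ballI impI)
      show "e / sqrt (lam (Suc k)) > 0" using e l by simp
      fix y assume y: "y \<in> H_set M psi lam" and n: "H_norm M psi lam (\<lambda>w. y w - x w) < e / sqrt (lam (Suc k))"
      let ?z = "\<lambda>w. y w - x w"
      have zH: "?z \<in> H_set M psi lam" and ipz: "?f ?z = ?f y - ?f x"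
        using H_diff[OF onb lam_pos _ y, of x] xin by auto
      have cb: "(?f ?z)^2 / lam (Suc k) \<le> H_inner M psi lam ?z ?z"
        by (rule coord_bound[OF lam_pos zH])
      have "(?f ?z)^2 \<le> lam (Suc k) * H_inner M psi lam ?z ?z"
        using cb l by (simp add: divide_le_eq mult.commute)
      then have "\<bar>?f ?z\<bar> \<le> sqrt (lam (Suc k) * H_inner M psi lam ?z ?z)"
        using real_sqrt_le_mono real_sqrt_abs by metis
      also have "\<dots> = sqrt (lam (Suc k)) * H_norm M psi lam ?z"
        by (simp add: H_norm_def real_sqrt_mult)
      also have "\<dots> < sqrt (lam (Suc k)) * (e / sqrt (lam (Suc k)))"
        using n l by (intro mult_strict_left_mono) auto
      also have "\<dots> = e" using l by simp
      finally have "dist (?f y) (?f x) < e" using ipz by (simp add: dist_real_def)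
      then have "?f y \<in> S" using e by (auto simp: dist_commute)
      then show "y \<in> ?f -` S \<inter> H_set M psi lam" using y by auto
    qed
  qed auto
  then show "?f -` S \<inter> space (H_borel M psi lam) \<in> sets (H_borel M psi lam)"
    by (simp add: H_borel_space H_borel_open)
qed



definition mfun :: "'a measure \<Rightarrow> (nat \<Rightarrow> 'a \<Rightarrow> real) \<Rightarrow> (nat \<Rightarrow> real) \<Rightarrow> real
    \<Rightarrow> ('a \<Rightarrow> real) \<Rightarrow> ennreal" where
  "mfun M psi lam s x = (let a = (\<lambda>j. (L2_inner M x (psi (Suc j)))^2 / (lam (Suc j))^2) in
        if summable a then ennreal ((suminf a) powr (s / 2)) else \<infinity>)"

lemma Mtilde_mfun: "Mtilde M psi lam s \<mu> = (\<integral>\<^sup>+ x. mfun M psi lam s x \<partial>\<mu>)"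
  unfolding Mtilde_def mfun_def ..

lemma mfun_measurable:
  assumes onb: "is_ONB M psi" and lam_pos: "\<forall>j\<ge>1. lam j > 0"
  shows "mfun M psi lam s \<in> borel_measurable (H_borel M psi lam)"
proof -
  let ?HB = "H_borel M psi lam"
  have [measurable]: "\<And>j. (\<lambda>x. L2_inner M x (psi (Suc j))) \<in> borel_measurable ?HB"
    by (rule coord_measurable[OF onb lam_pos])
  define a where "a = (\<lambda>x j. (L2_inner M x (psi (Suc j)))^2 / (lam (Suc j))^2)"
  have am[measurable]: "\<And>j. (\<lambda>x. a x j) \<in> borel_measurable ?HB" unfolding a_def by measurable
  have ann: "\<And>x j. 0 \<le> a x j" unfolding a_def by simp
  have "{x \<in> space ?HB. summable (a x)} = {x \<in> space ?HB. (\<Sum>j. ennreal (a x j)) \<noteq> top}"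
    using summable_suminf_not_top[OF ann] suminf_ennreal2[OF ann] by auto
  also have "\<dots> \<in> sets ?HB" by measurable
  finally have S: "{x \<in> space ?HB. summable (a x)} \<in> sets ?HB" .
  have "(\<lambda>x. if summable (a x) then ennreal ((suminf (a x)) powr (s / 2)) else \<infinity>) \<in> borel_measurable ?HB"
    by (rule measurable_If[OF _ _ S]) measurable
  then show ?thesis unfolding mfun_def Let_def by (simp only: a_def)
qed

lemma L2_inner_ONvec:
  assumes onb: "is_ONB M psi" and "j \<ge> 1" "i \<ge> 1"
  shows "L2_inner M (H_ONvec psi lam j) (psi i) = sqrt (lam j) * (if j = i then 1 else 0)"
proof -
  have "L2_inner M (H_ONvec psi lam j) (psi i) = sqrt (lam j) * L2_inner M (psi j) (psi i)"
    unfolding L2_inner_def H_ONvec_def by (simp add: mult.assoc)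
  then show ?thesis using onb assms by (simp add: is_ONB_def)
qed

lemma H_inner_ONvec:
  assumes onb: "is_ONB M psi" and lam_pos: "\<forall>j\<ge>1. lam j > 0" and j: "j \<ge> 1"
  shows "H_inner M psi lam x (H_ONvec psi lam j) = L2_inner M x (psi j) / sqrt (lam j)"
proof -
  have "(\<lambda>k. L2_inner M x (psi (Suc k)) * L2_inner M (H_ONvec psi lam j) (psi (Suc k)) / lam (Suc k))
      = (\<lambda>k. if k = j - 1 then L2_inner M x (psi (Suc k)) * sqrt (lam j) / lam (Suc k) else 0)"
    using j by (auto simp: L2_inner_ONvec[OF onb] fun_eq_iff)
  moreover have "(\<lambda>k. if k = j - 1 then L2_inner M x (psi (Suc k)) * sqrt (lam j) / lam (Suc k) else 0)
     sums (L2_inner M x (psi (Suc (j-1))) * sqrt (lam j) / lam (Suc (j-1)))"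
    by (rule sums_single)
  ultimately have "H_inner M psi lam x (H_ONvec psi lam j) = L2_inner M x (psi j) * sqrt (lam j) / lam j"
    unfolding H_inner_def using j by (simp add: sums_iff)
  also have "\<dots> = L2_inner M x (psi j) / (lam j / sqrt (lam j))"
    by simp
  also have "\<dots> = L2_inner M x (psi j) / sqrt (lam j)"
    using lam_pos[rule_format, OF j] by (simp add: real_div_sqrt)
  finally show ?thesis .
qed

lemma Proj_eq:
  assumes onb: "is_ONB M psi" and lam_pos: "\<forall>j\<ge>1. lam j > 0"
  shows "Proj M psi lam d x = (\<lambda>w. \<Sum>j=1..d. L2_inner M x (psi j) * psi j w)"
proof -
  have "\<And>j w. j \<in> {1..d} \<Longrightarrow> H_inner M psi lam x (H_ONvec psi lam j) * H_ONvec psi lam j w = L2_inner M x (psi j) * psi j w"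
  proof -
    fix j w assume "j \<in> {1..d}"
    then have j: "j \<ge> 1" by auto
    have "lam j > 0" using lam_pos j by auto
    then show "H_inner M psi lam x (H_ONvec psi lam j) * H_ONvec psi lam j w = L2_inner M x (psi j) * psi j w"
      by (simp add: H_inner_ONvec[OF onb lam_pos j]) (simp add: H_ONvec_def field_simps)
  qed
  then show ?thesis unfolding Proj_def by (intro ext sum.cong) auto
qed

lemma Proj_coord:
  assumes onb: "is_ONB M psi" and lam_pos: "\<forall>j\<ge>1. lam j > 0" and x: "x \<in> L2_set M" and k: "k \<ge> 1"
  shows "L2_inner M (\<lambda>w. Proj M psi lam d x w - x w) (psi k) = (if k \<le> d then 0 else - L2_inner M x (psi k))"
proof -
  have pL: "\<And>j. j \<ge> 1 \<Longrightarrow> psi j \<in> L2_set M" using onb by (auto simp: is_ONB_def)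
  have int: "\<And>j. j \<in> {1..d} \<Longrightarrow> integrable M (\<lambda>w. L2_inner M x (psi j) * (psi j w * psi k w))"
    using pL k by (auto intro!: L2_prod_integrable)
  have "L2_inner M (\<lambda>w. Proj M psi lam d x w - x w) (psi k)
     = (LINT w|M. (\<Sum>j=1..d. L2_inner M x (psi j) * (psi j w * psi k w)) - x w * psi k w)"
    unfolding L2_inner_def Proj_eq[OF onb lam_pos]
    by (rule Bochner_Integration.integral_cong) (auto simp: sum_distrib_left right_diff_distrib mult_ac)
  also have "\<dots> = (LINT w|M. (\<Sum>j=1..d. L2_inner M x (psi j) * (psi j w * psi k w))) - (LINT w|M. x w * psi k w)"
    by (rule Bochner_Integration.integral_diff) (auto intro!: Bochner_Integration.integrable_sum int L2_prod_integrable x pL k)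
  also have "(LINT w|M. (\<Sum>j=1..d. L2_inner M x (psi j) * (psi j w * psi k w)))
       = (\<Sum>j=1..d. L2_inner M x (psi j) * L2_inner M (psi j) (psi k))"
    by (subst Bochner_Integration.integral_sum) (use int in \<open>auto simp: L2_inner_def\<close>)
  also have "\<dots> = (\<Sum>j=1..d. if j = k then L2_inner M x (psi k) else 0)"
    using onb k by (intro sum.cong) (auto simp: is_ONB_def)
  also have "\<dots> = (if k \<le> d then L2_inner M x (psi k) else 0)"
    using k by (simp add: sum.delta)
  finally show ?thesis by (simp add: L2_inner_def)
qed



lemma resid_bound:
  assumes onb: "is_ONB M psi" and lam_pos: "\<forall>j\<ge>1. lam j > 0"
    and lam_mono: "\<forall>i j. 1 \<le> i \<longrightarrow> i \<le> j \<longrightarrow> lam j \<le> lam i"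
    and x: "x \<in> H_set M psi lam"
  shows "0 \<le> H_inner M psi lam (\<lambda>w. Proj M psi lam d x w - x w) (\<lambda>w. Proj M psi lam d x w - x w)"
    and "summable (\<lambda>j. (L2_inner M x (psi (Suc j)))^2 / (lam (Suc j))^2) \<Longrightarrow>
       H_inner M psi lam (\<lambda>w. Proj M psi lam d x w - x w) (\<lambda>w. Proj M psi lam d x w - x w)
       \<le> lam (Suc d) * (\<Sum>j. (L2_inner M x (psi (Suc j)))^2 / (lam (Suc j))^2)"
proof -
  let ?y = "\<lambda>w. Proj M psi lam d x w - x w"
  have xL: "x \<in> L2_set M" using x by (auto simp: H_set_def)
  have sx: "summable (\<lambda>j. (L2_inner M x (psi (Suc j)))^2 / lam (Suc j))" using x by (auto simp: H_set_def)
  define f where "f = (\<lambda>n. if Suc n \<le> d then 0 else (L2_inner M x (psi (Suc n)))^2 / lam (Suc n))"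
  have Heq: "H_inner M psi lam ?y ?y = suminf f"
    unfolding H_inner_def f_def
    by (rule arg_cong[where f=suminf]) (auto simp: Proj_coord[OF onb lam_pos xL] power2_eq_square)
  have fnn: "\<And>n. 0 \<le> f n" unfolding f_def using lam_pos by (auto intro!: divide_nonneg_pos)
  have sf: "summable f"
  proof (rule summable_comparison_test'[OF sx, where N=0])
    fix n :: nat
    have "lam (Suc n) > 0" using lam_pos by auto
    then show "norm (f n) \<le> (L2_inner M x (psi (Suc n)))^2 / lam (Suc n)"
      using fnn[of n] by (auto simp: f_def)
  qed
  show "0 \<le> H_inner M psi lam ?y ?y" unfolding Heq by (rule suminf_nonneg[OF sf fnn])
  assume sA: "summable (\<lambda>j. (L2_inner M x (psi (Suc j)))^2 / (lam (Suc j))^2)"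
  have "suminf f \<le> (\<Sum>j. lam (Suc d) * ((L2_inner M x (psi (Suc j)))^2 / (lam (Suc j))^2))"
  proof (rule suminf_le[OF _ sf summable_mult[OF sA]])
    fix n
    have ln: "lam (Suc n) > 0" and ld: "lam (Suc d) > 0" using lam_pos by auto
    show "f n \<le> lam (Suc d) * ((L2_inner M x (psi (Suc n)))^2 / (lam (Suc n))^2)"
    proof (cases "Suc n \<le> d")
      case True then show ?thesis using ld by (simp add: f_def)
    next
      case False
      then have le: "lam (Suc n) \<le> lam (Suc d)" using lam_mono by auto
      have "f n = lam (Suc n) * ((L2_inner M x (psi (Suc n)))^2 / (lam (Suc n))^2)"
        using False ln by (simp add: f_def power2_eq_square)
      also have "\<dots> \<le> lam (Suc d) * ((L2_inner M x (psi (Suc n)))^2 / (lam (Suc n))^2)"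
        by (rule mult_right_mono[OF le]) simp
      finally show ?thesis .
    qed
  qed
  then show "H_inner M psi lam ?y ?y \<le> lam (Suc d) * (\<Sum>j. (L2_inner M x (psi (Suc j)))^2 / (lam (Suc j))^2)"
    unfolding Heq using suminf_mult[OF sA, of "lam (Suc d)"] by linarith
qed

lemma pointwise:
  assumes onb: "is_ONB M psi" and lam_pos: "\<forall>j\<ge>1. lam j > 0"
    and lam_mono: "\<forall>i j. 1 \<le> i \<longrightarrow> i \<le> j \<longrightarrow> lam j \<le> lam i"
    and x: "x \<in> H_set M psi lam" and q: "0 < q" "q \<le> s"
  shows "ennreal (H_norm M psi lam (\<lambda>w. Proj M psi lam d x w - x w) powr q)
     \<le> ennreal (lam (Suc d) powr (q/2)) * (1 + mfun M psi lam s x)"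
proof -
  let ?y = "\<lambda>w. Proj M psi lam d x w - x w"
  let ?h = "H_inner M psi lam ?y ?y"
  let ?L = "lam (Suc d)"
  define A where "A = (\<lambda>j. (L2_inner M x (psi (Suc j)))^2 / (lam (Suc j))^2)"
  have h0: "0 \<le> ?h" by (rule resid_bound(1)[OF onb lam_pos lam_mono x])
  have L0: "?L > 0" using lam_pos by auto
  have hn: "H_norm M psi lam ?y powr q = ?h powr (q/2)"
    unfolding H_norm_def using h0 by (simp add: powr_half_sqrt[symmetric] powr_powr)
  show ?thesis
  proof (cases "summable A")
    case False
    then have "mfun M psi lam s x = \<infinity>" by (simp add: mfun_def A_def[symmetric])
    moreover have "ennreal (?L powr (q/2)) \<noteq> 0" using L0 by simp
    ultimately show ?thesis by (simp add: ennreal_mult_top)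
  next
    case True
    define S where "S = suminf A"
    have S0: "0 \<le> S" unfolding S_def by (rule suminf_nonneg[OF True]) (simp add: A_def)
    have m: "mfun M psi lam s x = ennreal (S powr (s/2))" using True by (simp add: mfun_def A_def[symmetric] S_def)
    have hb: "?h \<le> ?L * S" using resid_bound(2)[OF onb lam_pos lam_mono x] True by (simp add: A_def S_def)
    have "?h powr (q/2) \<le> (?L * S) powr (q/2)" using h0 hb q by (intro powr_mono2) auto
    also have "\<dots> = ?L powr (q/2) * S powr (q/2)" using L0 S0 by (simp add: powr_mult)
    also have "\<dots> \<le> ?L powr (q/2) * (1 + S powr (s/2))"
    proof (rule mult_left_mono)
      show "S powr (q/2) \<le> 1 + S powr (s/2)"
      proof (cases "S \<le> 1")
        case True
        have "S powr (q/2) \<le> 1 powr (q/2)" using True S0 q by (intro powr_mono2) auto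
        then have "S powr (q/2) \<le> 1" by simp
        then show ?thesis using powr_ge_zero[of S "s/2"] by linarith
      next
        case False
        then have "S powr (q/2) \<le> S powr (s/2)" using q by (intro powr_mono) auto
        then show ?thesis by simp
      qed
    qed simp
    finally have "ennreal (?h powr (q/2)) \<le> ennreal (?L powr (q/2) * (1 + S powr (s/2)))"
      by (rule ennreal_leI)
    also have "\<dots> = ennreal (?L powr (q/2)) * ennreal (1 + S powr (s/2))"
      by (rule ennreal_mult) auto
    also have "ennreal (1 + S powr (s/2)) = 1 + ennreal (S powr (s/2))"
      by (subst ennreal_plus) auto
    also have "ennreal (?L powr (q/2)) * (1 + ennreal (S powr (s/2))) = ennreal (?L powr (q/2)) * (1 + mfun M psi lam s x)"
      by (simp add: m)
    finally show ?thesis by (simp add: hn)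
  qed
qed



lemma lam_decay_bound:
  assumes lam_pos: "\<forall>j\<ge>1. lam j > 0" and pos_const: "\<gamma> > 0" "c0 > 0" "C0 > 0"
    and decay: "\<forall>j\<ge>1. lam j \<le> C0 * exp (- c0 * real j powr \<gamma>)" and q: "q > 0"
  shows "lam (Suc d) powr (q/2) \<le> C0 powr (q/2) * exp (- (c0/2) * q * real d powr \<gamma>)"
proof -
  have l: "lam (Suc d) > 0" using lam_pos by auto
  have "real d powr \<gamma> \<le> real (Suc d) powr \<gamma>" using pos_const by (intro powr_mono2) auto
  then have "exp (- c0 * real (Suc d) powr \<gamma>) \<le> exp (- c0 * real d powr \<gamma>)"
    using pos_const by simp
  then have "C0 * exp (- c0 * real (Suc d) powr \<gamma>) \<le> C0 * exp (- c0 * real d powr \<gamma>)"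
    using pos_const by simp
  then have "lam (Suc d) \<le> C0 * exp (- c0 * real d powr \<gamma>)"
    using decay[rule_format, of "Suc d"] by simp
  then have "lam (Suc d) powr (q/2) \<le> (C0 * exp (- c0 * real d powr \<gamma>)) powr (q/2)"
    using l q by (intro powr_mono2) auto
  also have "\<dots> = C0 powr (q/2) * exp (- c0 * real d powr \<gamma>) powr (q/2)"
    using pos_const by (simp add: powr_mult)
  also have "exp (- c0 * real d powr \<gamma>) powr (q/2) = exp (- (c0/2) * q * real d powr \<gamma>)"
    by (simp add: powr_def)
  finally show ?thesis .
qed

theorem lemma6p5:
  fixes M :: "'a measure" and psi :: "nat \<Rightarrow> 'a \<Rightarrow> real" and lam :: "nat \<Rightarrow> real"
    and p s \<gamma> c0 C0 K :: real
  assumes onb: "is_ONB M psi"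
    and lam_pos: "\<forall>j\<ge>1. lam j > 0"
    and lam_mono: "\<forall>i j. 1 \<le> i \<longrightarrow> i \<le> j \<longrightarrow> lam j \<le> lam i"
    and lam_lim: "lam \<longlonglongrightarrow> 0"
    and p: "1 \<le> p" and s: "s > 2 * p"
    and pos_const: "\<gamma> > 0" "c0 > 0" "C0 > 0"
    and decay: "\<forall>j\<ge>1. lam j \<le> C0 * exp (- c0 * real j powr \<gamma>)"
  shows "\<exists>c>0. \<forall>q\<in>{p..s}. \<exists>C>0. \<forall>\<mu>.
           prob_space \<mu> \<longrightarrow> sets \<mu> = sets (H_borel M psi lam) \<longrightarrow>
           Mtilde M psi lam s \<mu> \<le> ennreal K \<longrightarrow>
           (\<forall>d\<ge>1. (\<integral>\<^sup>+ x. ennreal (H_norm M psi lam (\<lambda>w. Proj M psi lam d x w - x w) powr q) \<partial>\<mu>)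
                    \<le> ennreal (C * exp (- c * q * real d powr \<gamma>)))"
proof (rule exI[of _ "c0/2"], intro conjI ballI)
  show "c0/2 > 0" using pos_const by simp
  fix q assume qin: "q \<in> {p..s}"
  then have q: "0 < q" "q \<le> s" using p by auto
  define C where "C = C0 powr (q/2) * (1 + max K 0)"
  show "\<exists>C>0. \<forall>\<mu>.
           prob_space \<mu> \<longrightarrow> sets \<mu> = sets (H_borel M psi lam) \<longrightarrow>
           Mtilde M psi lam s \<mu> \<le> ennreal K \<longrightarrow>
           (\<forall>d\<ge>1. (\<integral>\<^sup>+ x. ennreal (H_norm M psi lam (\<lambda>w. Proj M psi lam d x w - x w) powr q) \<partial>\<mu>)
                    \<le> ennreal (C * exp (- (c0/2) * q * real d powr \<gamma>)))"
  proof (intro exI[of _ C] conjI allI impI)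
    show "C > 0" unfolding C_def using pos_const by (simp add: add_pos_nonneg)
    fix \<mu> :: "('a \<Rightarrow> real) measure" and d :: nat
    assume P: "prob_space \<mu>" and sets: "sets \<mu> = sets (H_borel M psi lam)"
      and MK: "Mtilde M psi lam s \<mu> \<le> ennreal K" and d: "d \<ge> 1"
    have sp: "space \<mu> = H_set M psi lam"
      using sets_eq_imp_space_eq[OF sets] by (simp add: H_borel_space)
    have mm: "mfun M psi lam s \<in> borel_measurable \<mu>"
      using mfun_measurable[OF onb lam_pos] measurable_cong_sets[OF sets refl] by blast
    let ?L = "lam (Suc d) powr (q/2)"
    have "(\<integral>\<^sup>+ x. ennreal (H_norm M psi lam (\<lambda>w. Proj M psi lam d x w - x w) powr q) \<partial>\<mu>)
        \<le> (\<integral>\<^sup>+ x. ennreal ?L * (1 + mfun M psi lam s x) \<partial>\<mu>)"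
      by (rule nn_integral_mono) (use pointwise[OF onb lam_pos lam_mono _ q] sp in auto)
    also have "\<dots> = ennreal ?L * (\<integral>\<^sup>+ x. 1 + mfun M psi lam s x \<partial>\<mu>)"
      by (rule nn_integral_cmult) (use mm in auto)
    also have "(\<integral>\<^sup>+ x. 1 + mfun M psi lam s x \<partial>\<mu>) = 1 + Mtilde M psi lam s \<mu>"
      using mm prob_space.emeasure_space_1[OF P] by (simp add: nn_integral_add Mtilde_mfun)
    also have "ennreal ?L * (1 + Mtilde M psi lam s \<mu>) \<le> ennreal ?L * (1 + ennreal (max K 0))"
      using order_trans[OF MK ennreal_leI[of K "max K 0"]] by (intro mult_left_mono add_left_mono) auto
    also have "\<dots> = ennreal (?L * (1 + max K 0))"
    proof -
      have e1: "1 + ennreal (max K 0) = ennreal (1 + max K 0)" by (subst ennreal_plus) auto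
      have e2: "ennreal (?L * (1 + max K 0)) = ennreal ?L * ennreal (1 + max K 0)"
        by (rule ennreal_mult) auto
      show ?thesis by (simp only: e1 e2)
    qed
    also have "\<dots> \<le> ennreal (C * exp (- (c0/2) * q * real d powr \<gamma>))"
    proof (rule ennreal_leI)
      have "?L * (1 + max K 0) \<le> (C0 powr (q/2) * exp (- (c0/2) * q * real d powr \<gamma>)) * (1 + max K 0)"
        by (rule mult_right_mono[OF lam_decay_bound[OF lam_pos pos_const decay q(1)]]) simp
      then show "?L * (1 + max K 0) \<le> C * exp (- (c0/2) * q * real d powr \<gamma>)"
        by (simp add: C_def mult_ac)
    qed
    finally show "(\<integral>\<^sup>+ x. ennreal (H_norm M psi lam (\<lambda>w. Proj M psi lam d x w - x w) powr q) \<partial>\<mu>)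
                    \<le> ennreal (C * exp (- (c0/2) * q * real d powr \<gamma>))" .
  qed
qed

end
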